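(* Let $\beta\in(3/2,\beta^*]$. Then $\mathbb P(D)=1$.
   Context: $\beta^*\approx1.5437$ is the real root of $x^3-2x^2+2x=2$. $\vec q_0=(0,0)$, $\vec q_1=(1,0)$, $\vec q_2=(0,1)$, $f_i(\vec z)=(\vec z+\vec q_i)/\beta$. $H=\{(x,y):x<\frac1\beta,\ y<\frac1\beta,\ x+y>\frac{1}{\beta(\beta-1)}\}$; $\tilde C_{01}=\{x\ge\frac1\beta,\ y\ge0,\ x+y\le\frac{1}{\beta(\beta-1)}\}$; $\tilde C_{12}=\{x\ge\frac1\beta,\ y\ge\frac1\beta,\ x+y\le\frac1{\beta-1}\}$; $\tilde C_{02}=\{x\ge0,\ y\ge\frac1\beta,\ x+y\le\frac{1}{\beta(\beta-1)}\}$; for $ij\in\{01,12,02\}$, $C_{ij}=\tilde C_{ij}\setminus\bigl(\bigcup_{n\ge1}f_if_j^n(H)\cup\bigcup_{n\ge1}f_jf_i^n(H)\bigr)$, and $C=C_{01}\cup C_{12}\cup C_{02}$. $\Upsilon=\{0,1,2\}^{\mathbb N}$ with product $\sigma$-algebra and uniform product measure $\mathbb P$. $D$ is the set of $(b_1,b_2,\ldots)\in\Upsilon$ such that $\sum_{i\ge1}\vec q_{b_{j+i-1}}\beta^{-i}\in C$ for infinitely many $j$. *)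

theory Defs
  imports "HOL-Probability.Probability"
begin

definition beta_star :: real where
  "beta_star = (THE x::real. x^3 - 2*x^2 + 2*x = 2)"

text \<open>The vectors q_0, q_1, q_2 in the plane (digits outside {0,1,2} never occur).\<close>
definition qv :: "nat \<Rightarrow> real \<times> real" where
  "qv i = (if i = 1 then (1,0) else if i = 2 then (0,1) else (0,0))"

definition fmap :: "real \<Rightarrow> nat \<Rightarrow> real \<times> real \<Rightarrow> real \<times> real" where
  "fmap \<beta> i z = scaleR (1/\<beta>) (z + qv i)"

definition Hset :: "real \<Rightarrow> (real \<times> real) set" where
  "Hset \<beta> = {(x,y). x < 1/\<beta> \<and> y < 1/\<beta> \<and> x + y > 1/(\<beta>*(\<beta>-1))}"

definition Ct01 :: "real \<Rightarrow> (real \<times> real) set" where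
  "Ct01 \<beta> = {(x,y). x \<ge> 1/\<beta> \<and> y \<ge> 0 \<and> x + y \<le> 1/(\<beta>*(\<beta>-1))}"

definition Ct12 :: "real \<Rightarrow> (real \<times> real) set" where
  "Ct12 \<beta> = {(x,y). x \<ge> 1/\<beta> \<and> y \<ge> 1/\<beta> \<and> x + y \<le> 1/(\<beta>-1)}"

definition Ct02 :: "real \<Rightarrow> (real \<times> real) set" where
  "Ct02 \<beta> = {(x,y). x \<ge> 0 \<and> y \<ge> 1/\<beta> \<and> x + y \<le> 1/(\<beta>*(\<beta>-1))}"

definition Cpart :: "real \<Rightarrow> nat \<Rightarrow> nat \<Rightarrow> (real \<times> real) set \<Rightarrow> (real \<times> real) set" where
  "Cpart \<beta> i j T = T - (\<Union>n\<in>{1..}. (fmap \<beta> i \<circ> (fmap \<beta> j ^^ n)) ` Hset \<beta>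
                              \<union> (fmap \<beta> j \<circ> (fmap \<beta> i ^^ n)) ` Hset \<beta>)"

definition Cset :: "real \<Rightarrow> (real \<times> real) set" where
  "Cset \<beta> = Cpart \<beta> 0 1 (Ct01 \<beta>) \<union> Cpart \<beta> 1 2 (Ct12 \<beta>) \<union> Cpart \<beta> 0 2 (Ct02 \<beta>)"

text \<open>Sequences b = (b_1, b_2, ...) are represented as \<omega> :: nat \<Rightarrow> nat with b_k = \<omega> (k-1).\<close>
definition tailpt :: "real \<Rightarrow> (nat \<Rightarrow> nat) \<Rightarrow> nat \<Rightarrow> real \<times> real" where
  "tailpt \<beta> \<omega> j = (\<Sum>i. scaleR (1 / \<beta>^(Suc i)) (qv (\<omega> (j + i))))"

definition Ups :: "(nat \<Rightarrow> nat) measure" where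
  "Ups = PiM UNIV (\<lambda>_. uniform_count_measure {0,1,2::nat})"

definition Dset :: "real \<Rightarrow> (nat \<Rightarrow> nat) set" where
  "Dset \<beta> = {\<omega>. (\<forall>n. \<omega> n \<in> {0,1,2}) \<and> infinite {j. tailpt \<beta> \<omega> j \<in> Cset \<beta>}}"

end

theory Submission
  imports Defs
begin


lemma qv_norm: "norm (qv i) \<le> 1"
  by (auto simp: qv_def)

lemma qv_cases: "fst (qv i) \<ge> 0 \<and> snd (qv i) \<ge> 0 \<and> fst (qv i) + snd (qv i) \<le> 1"
  by (auto simp: qv_def)

lemma geo_summ: "(\<beta>::real) > 1 \<Longrightarrow> summable (\<lambda>i. (1/\<beta>) ^ Suc i)"
  using summable_mult[OF summable_geometric[of "1/\<beta>"], of "1/\<beta>"] by simp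

lemma geo_sum: "(\<beta>::real) > 1 \<Longrightarrow> (\<Sum>i. (1/\<beta>) ^ Suc i) = 1/(\<beta> - 1)"
proof -
  assume b: "\<beta> > 1"
  have "(\<Sum>i. (1/\<beta>) ^ Suc i) = (1/\<beta>) * (\<Sum>i. (1/\<beta>) ^ i)"
    using suminf_mult[OF summable_geometric[of "1/\<beta>"], of "1/\<beta>"] b by (simp only: power_Suc) simp
  also have "\<dots> = (1/\<beta>) * (1 / (1 - 1/\<beta>))" using b by (subst suminf_geometric) auto
  also have "\<dots> = 1/(\<beta> - 1)" using b by (simp add: field_simps)
  finally show ?thesis .
qed

lemma tail_summable:
  assumes "(\<beta>::real) > 1"
  shows "summable (\<lambda>i. (1 / \<beta>^(Suc i)) *\<^sub>R qv (\<omega> (j + i)))"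
proof (rule summable_comparison_test[OF _ geo_summ[OF assms]])
  show "\<exists>N. \<forall>n\<ge>N. norm ((1 / \<beta>^(Suc n)) *\<^sub>R qv (\<omega> (j + n))) \<le> (1/\<beta>) ^ Suc n"
  proof (intro exI allI impI)
    fix n :: nat
    have "norm ((1 / \<beta>^(Suc n)) *\<^sub>R qv (\<omega> (j + n))) = (1/\<beta>)^Suc n * norm (qv (\<omega> (j + n)))"
      using assms by (simp add: power_divide)
    also have "\<dots> \<le> (1/\<beta>)^Suc n * 1"
      using assms qv_norm by (intro mult_left_mono) auto
    finally show "norm ((1 / \<beta>^(Suc n)) *\<^sub>R qv (\<omega> (j + n))) \<le> (1/\<beta>) ^ Suc n" by simp
  qed
qed

lemma tail_rec:
  assumes "(\<beta>::real) > 1"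
  shows "tailpt \<beta> \<omega> j = fmap \<beta> (\<omega> j) (tailpt \<beta> \<omega> (Suc j))"
proof -
  let ?f = "\<lambda>i. (1 / \<beta>^(Suc i)) *\<^sub>R qv (\<omega> (j + i))"
  have s: "summable ?f" by (rule tail_summable[OF assms])
  have "(\<Sum>n. ?f (Suc n)) = (\<Sum>n. (1/\<beta>) *\<^sub>R ((1 / \<beta>^(Suc n)) *\<^sub>R qv (\<omega> (Suc j + n))))"
    by (intro suminf_cong) (simp add: field_simps)
  also have "\<dots> = (1/\<beta>) *\<^sub>R tailpt \<beta> \<omega> (Suc j)"
    unfolding tailpt_def using tail_summable[OF assms, of \<omega> "Suc j"]
    by (subst suminf_scaleR_right) auto
  finally have "tailpt \<beta> \<omega> j = ?f 0 + (1/\<beta>) *\<^sub>R tailpt \<beta> \<omega> (Suc j)"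
    using suminf_split_head[OF s] unfolding tailpt_def by (simp add: algebra_simps)
  then show ?thesis by (simp add: fmap_def scaleR_add_right)
qed

lemma tail_T:
  assumes b: "(\<beta>::real) > 1"
  shows "fst (tailpt \<beta> \<omega> j) \<ge> 0 \<and> snd (tailpt \<beta> \<omega> j) \<ge> 0 \<and> fst (tailpt \<beta> \<omega> j) + snd (tailpt \<beta> \<omega> j) \<le> 1/(\<beta>-1)"
proof -
  let ?f = "\<lambda>i. (1 / \<beta>^(Suc i)) *\<^sub>R qv (\<omega> (j + i))"
  have s: "summable ?f" by (rule tail_summable[OF assms])
  have bl: "bounded_linear (\<lambda>z::real\<times>real. fst z + snd z)"
    by (intro bounded_linear_add bounded_linear_fst bounded_linear_snd)
  have f1: "fst (tailpt \<beta> \<omega> j) = (\<Sum>i. fst (?f i))"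
    unfolding tailpt_def by (rule bounded_linear.suminf[OF bounded_linear_fst s])
  have f2: "snd (tailpt \<beta> \<omega> j) = (\<Sum>i. snd (?f i))"
    unfolding tailpt_def by (rule bounded_linear.suminf[OF bounded_linear_snd s])
  have f3: "fst (tailpt \<beta> \<omega> j) + snd (tailpt \<beta> \<omega> j) = (\<Sum>i. fst (?f i) + snd (?f i))"
    unfolding tailpt_def by (rule bounded_linear.suminf[OF bl s])
  have s1: "summable (\<lambda>i. fst (?f i))" by (rule bounded_linear.summable[OF bounded_linear_fst s])
  have s2: "summable (\<lambda>i. snd (?f i))" by (rule bounded_linear.summable[OF bounded_linear_snd s])
  have s3: "summable (\<lambda>i. fst (?f i) + snd (?f i))" by (rule bounded_linear.summable[OF bl s])
  have "0 \<le> (\<Sum>i. fst (?f i))"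
    using b qv_cases by (intro suminf_nonneg[OF s1]) auto
  moreover have "0 \<le> (\<Sum>i. snd (?f i))"
    using b qv_cases by (intro suminf_nonneg[OF s2]) auto
  moreover have "(\<Sum>i. fst (?f i) + snd (?f i)) \<le> (\<Sum>i. (1/\<beta>) ^ Suc i)"
  proof (rule suminf_le[OF _ s3 geo_summ[OF b]])
    fix n
    have "fst (?f n) + snd (?f n) = (1/\<beta>)^Suc n * (fst (qv (\<omega> (j+n))) + snd (qv (\<omega> (j+n))))"
      by (simp add: power_divide algebra_simps)
    also have "\<dots> \<le> (1/\<beta>)^Suc n * 1"
      using b qv_cases by (intro mult_left_mono) auto
    finally show "fst (?f n) + snd (?f n) \<le> (1/\<beta>)^Suc n" by simp
  qed
  ultimately show ?thesis using f1 f2 f3 geo_sum[OF b] by simp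
qed

definition wd :: "nat \<Rightarrow> nat" where "wd i = (if i = 0 then 1 else if i = 1 then 2 else 0)"

definition good :: "nat \<Rightarrow> (nat \<Rightarrow> nat) \<Rightarrow> bool" where
  "good m \<omega> = (\<forall>i<7. \<omega> (m + i) = wd i)"

lemma fmap_Pair: "fmap \<beta> i (a, b) = ((a + fst (qv i)) / \<beta>, (b + snd (qv i)) / \<beta>)"
  by (cases "qv i") (simp add: fmap_def divide_inverse algebra_simps)

lemma unroll:
  assumes b: "(\<beta>::real) > 1" and g: "good m \<omega>"
  shows "tailpt \<beta> \<omega> m = (1/\<beta> + fst (tailpt \<beta> \<omega> (m+7)) / \<beta>^7, 1/\<beta>^2 + snd (tailpt \<beta> \<omega> (m+7)) / \<beta>^7)"
proof -
  have r: "tailpt \<beta> \<omega> (m + i) = fmap \<beta> (wd i) (tailpt \<beta> \<omega> (m + Suc i))" if "i < 7" for i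
    using tail_rec[OF b, of \<omega> "m+i"] g that by (simp add: good_def)
  obtain a c where ac: "tailpt \<beta> \<omega> (m+7) = (a, c)" by fastforce
  have "tailpt \<beta> \<omega> m = fmap \<beta> 1 (fmap \<beta> 2 (fmap \<beta> 0 (fmap \<beta> 0 (fmap \<beta> 0 (fmap \<beta> 0 (fmap \<beta> 0 (a, c)))))))"
    using r[of 0] r[of 1] r[of 2] r[of 3] r[of 4] r[of 5] r[of 6] ac
    by (simp add: wd_def numeral_eq_Suc)
  also have "\<dots> = (1/\<beta> + a / \<beta>^7, 1/\<beta>^2 + c / \<beta>^7)"
    using b by (simp add: fmap_Pair qv_def field_simps power_numeral_reduce)
  finally show ?thesis using ac by simp
qed

lemma poly_ineq:
  assumes b1: "3/2 < (\<beta>::real)" and b2: "\<beta> \<le> 31/20"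
  shows "1/\<beta> + 1/\<beta>^2 + 1/(\<beta>^7*(\<beta>-1)) \<le> 1/(\<beta>*(\<beta>-1))"
proof -
  have p5: "\<beta>^5 \<ge> (3/2)^5" using b1 by (intro power_mono) auto
  have q: "\<beta>^2 - \<beta> - 1 \<le> -(59/400)"
  proof -
    have "(\<beta> - 31/20) * (\<beta> + 11/20) \<le> 0" using b1 b2 by (intro mult_nonpos_nonneg) auto
    then show ?thesis by (simp add: power2_eq_square algebra_simps)
  qed
  have "\<beta>^5 * (\<beta>^2 - \<beta> - 1) \<le> \<beta>^5 * (-(59/400))"
    using q b1 by (intro mult_left_mono) auto
  also have "\<dots> \<le> (3/2)^5 * (-(59/400))" using p5 by simp
  also have "(3/2::real)^5 = 243/32" by (simp add: power_divide)
  finally have k0: "\<beta>^5 * (\<beta>^2 - \<beta> - 1) \<le> -1" by simp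
  define P where "P = \<beta>^5"
  have P6: "\<beta>^7 = \<beta>*\<beta>*P" by (simp add: P_def power_Suc[symmetric] numeral_eq_Suc)
  have Ppos: "P > 0" using b1 by (simp add: P_def)
  have kk: "\<beta>*\<beta>*P - \<beta>*P - P + 1 \<le> 0" using k0 unfolding P_def[symmetric]
    by (simp add: algebra_simps power2_eq_square)
  define D where "D = \<beta>*\<beta>*P*(\<beta>-1)"
  have Dpos: "D > 0" using b1 Ppos by (simp add: D_def)
  have t1: "1/\<beta> = \<beta>*P*(\<beta>-1) / D" using b1 Ppos by (simp add: D_def field_simps)
  have t2: "1/\<beta>^2 = P*(\<beta>-1) / D" using b1 Ppos by (simp add: D_def field_simps power2_eq_square)
  have t3: "1/(\<beta>^7*(\<beta>-1)) = 1 / D" by (simp add: D_def P6)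
  have t4: "1/(\<beta>*(\<beta>-1)) = \<beta>*P / D" using b1 Ppos by (simp add: D_def field_simps)
  have "\<beta>*P*(\<beta>-1) / D + P*(\<beta>-1) / D + 1 / D = (\<beta>*P*(\<beta>-1) + P*(\<beta>-1) + 1) / D"
    by (simp add: add_divide_distrib)
  also have "\<dots> \<le> \<beta>*P / D"
    using kk Dpos by (intro divide_right_mono) (auto simp: algebra_simps)
  finally show ?thesis unfolding t1 t2 t3 t4 .
qed

lemma snd_fmap01: "i \<in> {0,1} \<Longrightarrow> snd (fmap \<beta> i z) = snd z / \<beta>"
  by (cases z) (auto simp: fmap_Pair qv_def)

lemma snd_funpow: "j \<in> {0,1} \<Longrightarrow> snd ((fmap \<beta> j ^^ n) z) = snd z / \<beta>^n"
  by (induction n) (auto simp: snd_fmap01)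

lemma excl:
  assumes b: "(\<beta>::real) > 1" and n: "n \<ge> 1" and h: "h \<in> Hset \<beta>" and ij: "i \<in> {0,1}" "j \<in> {0,1}"
  shows "snd ((fmap \<beta> i \<circ> fmap \<beta> j ^^ n) h) < 1/\<beta>^3"
proof -
  have "snd ((fmap \<beta> i \<circ> fmap \<beta> j ^^ n) h) = snd h / \<beta>^n / \<beta>"
    using ij by (simp add: snd_fmap01 snd_funpow)
  also have "\<dots> < (1/\<beta>) / \<beta>^n / \<beta>"
    using h b by (intro divide_strict_right_mono) (auto simp: Hset_def)
  also have "\<dots> = 1 / \<beta>^(n+2)" by (simp add: power_add field_simps power_numeral_reduce)
  also have "\<dots> \<le> 1 / \<beta>^3"
    using b n by (intro divide_left_mono power_increasing) auto
  finally show ?thesis .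
qed


lemma good_C:
  assumes b1: "3/2 < (\<beta>::real)" and b2: "\<beta> \<le> 31/20" and g: "good m \<omega>"
  shows "tailpt \<beta> \<omega> m \<in> Cset \<beta>"
proof -
  have b: "\<beta> > 1" using b1 by simp
  obtain a c where ac: "tailpt \<beta> \<omega> (m+7) = (a, c)" by fastforce
  have T: "a \<ge> 0" "c \<ge> 0" "a + c \<le> 1/(\<beta>-1)" using tail_T[OF b, of \<omega> "m+7"] ac by auto
  define x where "x = 1/\<beta> + a / \<beta>^7"
  define y where "y = 1/\<beta>^2 + c / \<beta>^7"
  have z: "tailpt \<beta> \<omega> m = (x, y)" by (simp only: unroll[OF b g] ac fst_conv snd_conv x_def y_def)
  have x1: "x \<ge> 1/\<beta>" using T b by (simp add: x_def)
  have y1: "y \<ge> 1/\<beta>^2" using T b by (simp add: y_def)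
  have y0: "y \<ge> 0" using T b by (simp add: y_def)
  have "x + y = 1/\<beta> + 1/\<beta>^2 + (a + c)/\<beta>^7" by (simp add: x_def y_def add_divide_distrib)
  also have "\<dots> \<le> 1/\<beta> + 1/\<beta>^2 + (1/(\<beta>-1))/\<beta>^7"
    using b by (intro add_left_mono divide_right_mono T(3)) simp
  also have "\<dots> = 1/\<beta> + 1/\<beta>^2 + 1/(\<beta>^7*(\<beta>-1))" by (simp only: divide_divide_eq_left mult.commute)
  also have "\<dots> \<le> 1/(\<beta>*(\<beta>-1))" by (rule poly_ineq[OF b1 b2])
  finally have s: "x + y \<le> 1/(\<beta>*(\<beta>-1))" .
  have y3: "y > 1/\<beta>^3"
  proof -
    have "1/\<beta>^3 < 1/\<beta>^2" using b by (intro divide_strict_left_mono power_strict_increasing) auto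
    then show ?thesis using y1 by simp
  qed
  have inC: "(x, y) \<in> Ct01 \<beta>" using x1 y0 s by (simp add: Ct01_def)
  have notE: "(x, y) \<notin> (fmap \<beta> i \<circ> (fmap \<beta> j ^^ n)) ` Hset \<beta>" if "n \<ge> 1" "i \<in> {0,1}" "j \<in> {0,1}" for n i j
  proof
    assume "(x, y) \<in> (fmap \<beta> i \<circ> (fmap \<beta> j ^^ n)) ` Hset \<beta>"
    then obtain h where h: "h \<in> Hset \<beta>" "(x, y) = (fmap \<beta> i \<circ> (fmap \<beta> j ^^ n)) h" by blast
    have "snd ((fmap \<beta> i \<circ> fmap \<beta> j ^^ n) h) < 1/\<beta>^3" by (rule excl[OF b that(1) h(1) that(2,3)])
    then show False using h(2) y3 by (metis snd_conv less_asym)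
  qed
  have "(x, y) \<in> Cpart \<beta> 0 1 (Ct01 \<beta>)"
    unfolding Cpart_def using inC notE by auto
  then show ?thesis using z by (simp add: Cset_def)
qed

lemma cubic_unique:
  fixes x y :: real
  assumes "x^3 - 2*x^2 + 2*x = 2" "y^3 - 2*y^2 + 2*y = 2"
  shows "x = y"
proof (rule ccontr)
  assume ne: "x \<noteq> y"
  have id: "(x^3 - 2*x^2 + 2*x) - (y^3 - 2*y^2 + 2*y) = (x - y) * ((3/4)*(x+y-4/3)^2 + (1/4)*(x-y)^2 + 2/3)"
    unfolding power2_eq_square power3_eq_cube by algebra
  have pos: "(3/4)*(x+y-4/3)^2 + (1/4)*(x-y)^2 + 2/3 > (0::real)"
    by (intro add_nonneg_pos add_nonneg_nonneg) auto
  have "(x - y) * ((3/4)*(x+y-4/3)^2 + (1/4)*(x-y)^2 + 2/3) = 0" using id assms by simp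
  then show False using ne pos by simp
qed

lemma beta_star_le: "beta_star \<le> 31/20"
proof -
  let ?p = "\<lambda>x::real. x^3 - 2*x^2 + 2*x"
  have "\<exists>x\<ge>3/2. x \<le> 31/20 \<and> ?p x = 2"
    apply (rule IVT')
       apply (simp add: power_divide)
      apply (simp add: power_divide)
     apply simp
    apply (intro continuous_intros)
    done
  then obtain x0 where x0: "x0 \<le> 31/20" "?p x0 = 2" by auto
  have "beta_star = x0" unfolding beta_star_def
    apply (rule the_equality)
     apply (rule x0(2))
    apply (erule cubic_unique[OF _ x0(2)])
    done
  then show ?thesis using x0 by simp
qed



abbreviation "M3 \<equiv> uniform_count_measure {0,1,2::nat}"

lemma M3_prob: "prob_space M3"
  by (rule prob_space_uniform_count_measure) auto

interpretation S3: sequence_space M3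
proof -
  have "product_prob_space (\<lambda>i. M3)"
    unfolding product_prob_space_def product_sigma_finite_def product_prob_space_axioms_def
    using M3_prob prob_space_imp_sigma_finite by blast
  then show "sequence_space M3" by (simp add: sequence_space_def)
qed

lemma Ups_eq: "Ups = S3.S" by (simp add: Ups_def)

lemma space_S: "space S3.S = {\<omega>. \<forall>n. \<omega> n \<in> {0,1,2}}"
  by (simp add: space_PiM space_uniform_count_measure PiE_def Pi_def)

lemma shift_meas: "(\<lambda>\<omega> k. \<omega> (k + n)) \<in> measurable S3.S S3.S"
  apply (rule measurable_PiM_single')
   apply simp
  apply (unfold space_S)
  apply (auto simp: PiE_iff space_uniform_count_measure)
  done

lemma blk_meas: "{\<omega>\<in>space S3.S. \<forall>k. \<not> (\<forall>i<(7::nat). \<omega> (7*k+i) = w i)} \<in> sets S3.S"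
  by measurable

lemma S_prob: "prob_space S3.S"
  by (rule S3.P.prob_space_axioms)

lemma comb_space: "\<omega> \<in> space S3.S \<Longrightarrow> \<omega>' \<in> space S3.S \<Longrightarrow> comb_seq n \<omega> \<omega>' \<in> space S3.S"
  unfolding space_S by (auto simp: comb_seq_def)

lemma split_meas:
  assumes A: "A \<in> sets S3.S" and X: "X \<in> sets S3.S"
    and pre: "\<And>\<omega> \<omega>'. \<omega> \<in> space S3.S \<Longrightarrow> \<omega>' \<in> space S3.S \<Longrightarrow> (\<forall>i<n. \<omega> i = \<omega>' i) \<Longrightarrow> \<omega> \<in> A \<Longrightarrow> \<omega>' \<in> A"
  shows "emeasure S3.S {\<omega>\<in>space S3.S. \<omega> \<in> A \<and> (\<lambda>k. \<omega> (k + n)) \<in> X} = emeasure S3.S A * emeasure S3.S X"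
proof -
  let ?f = "\<lambda>(\<omega>, \<omega>'). comb_seq n \<omega> \<omega>'"
  have Ymeas: "{\<omega>\<in>space S3.S. \<omega> \<in> A \<and> (\<lambda>k. \<omega> (k + n)) \<in> X} \<in> sets S3.S"
  proof -
    have "{\<omega>\<in>space S3.S. \<omega> \<in> A \<and> (\<lambda>k. \<omega> (k + n)) \<in> X} = A \<inter> ((\<lambda>\<omega> k. \<omega> (k + n)) -` X \<inter> space S3.S)"
      using sets.sets_into_space[OF A] by auto
    also have "\<dots> \<in> sets S3.S"
      using A measurable_sets[OF shift_meas X] by auto
    finally show ?thesis .
  qed
  have "?f -` {\<omega>\<in>space S3.S. \<omega> \<in> A \<and> (\<lambda>k. \<omega> (k + n)) \<in> X} \<inter> space (S3.S \<Otimes>\<^sub>M S3.S) = A \<times> X"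
  proof (rule set_eqI)
    fix p :: "(nat \<Rightarrow> nat) \<times> (nat \<Rightarrow> nat)"
    obtain a b where p: "p = (a, b)" by fastforce
    have sh: "(\<lambda>k. comb_seq n a b (k + n)) = b" by (auto simp: comb_seq_add)
    have "p \<in> A \<times> X" if "p \<in> ?f -` {\<omega>\<in>space S3.S. \<omega> \<in> A \<and> (\<lambda>k. \<omega> (k + n)) \<in> X} \<inter> space (S3.S \<Otimes>\<^sub>M S3.S)"
    proof -
      have sa: "a \<in> space S3.S" "b \<in> space S3.S" using that p by (auto simp: space_pair_measure)
      have c: "comb_seq n a b \<in> A" "comb_seq n a b \<in> space S3.S" using that p by auto
      have "a \<in> A" using pre[OF c(2) sa(1) _ c(1)] comb_seq_less[of _ n a b] by auto
      moreover have "b \<in> X" using that p sh by auto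
      ultimately show ?thesis using p by auto
    qed
    moreover have "p \<in> ?f -` {\<omega>\<in>space S3.S. \<omega> \<in> A \<and> (\<lambda>k. \<omega> (k + n)) \<in> X} \<inter> space (S3.S \<Otimes>\<^sub>M S3.S)" if "p \<in> A \<times> X"
    proof -
      have ab: "a \<in> A" "b \<in> X" using that p by auto
      have sa: "a \<in> space S3.S" "b \<in> space S3.S" using ab sets.sets_into_space[OF A] sets.sets_into_space[OF X] by auto
      have sc: "comb_seq n a b \<in> space S3.S" using comb_space[OF sa] .
      have "comb_seq n a b \<in> A" using pre[OF sa(1) sc _ ab(1)] comb_seq_less[of _ n a b] by auto
      then show ?thesis using p sc sa sh ab by (auto simp: space_pair_measure)
    qed
    ultimately show "p \<in> ?f -` {\<omega>\<in>space S3.S. \<omega> \<in> A \<and> (\<lambda>k. \<omega> (k + n)) \<in> X} \<inter> space (S3.S \<Otimes>\<^sub>M S3.S) \<longleftrightarrow> p \<in> A \<times> X" by blast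
  qed
  then have "emeasure S3.S {\<omega>\<in>space S3.S. \<omega> \<in> A \<and> (\<lambda>k. \<omega> (k + n)) \<in> X} = emeasure (S3.S \<Otimes>\<^sub>M S3.S) (A \<times> X)"
    apply (subst S3.PiM_comb_seq[symmetric, of n])
    apply (subst emeasure_distr)
    using Ymeas measurable_comb_seq by auto
  also have "\<dots> = emeasure S3.S A * emeasure S3.S X"
    using A X S_prob by (intro sigma_finite_measure.emeasure_pair_measure_Times)
      (auto simp: prob_space_imp_sigma_finite)
  finally show ?thesis .
qed


lemma Fmeas: "{\<omega>\<in>space S3.S. \<forall>k. \<not> good (7*k) \<omega>} \<in> sets S3.S"
  unfolding good_def by measurable

lemma A0meas: "{\<omega>\<in>space S3.S. \<not> good 0 \<omega>} \<in> sets S3.S"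
  unfolding good_def by measurable

lemma prob_good0: "measure S3.S {\<omega>\<in>space S3.S. good 0 \<omega>} = (1/3)^7"
proof -
  have "{\<omega>\<in>space S3.S. good 0 \<omega>} = {\<omega>\<in>space S3.S. \<forall>i\<in>{..<7}. \<omega> i \<in> {wd i}}"
    by (auto simp: good_def)
  also have "emeasure S3.S \<dots> = (\<Prod>i\<in>{..<7::nat}. emeasure M3 {wd i})"
    by (rule S3.emeasure_PiM_Collect) (auto simp: wd_def)
  also have "\<dots> = (\<Prod>i\<in>{..<7::nat}. ennreal (1/3))"
    by (intro prod.cong) (auto simp: emeasure_uniform_count_measure wd_def ennreal_divide_times divide_ennreal[symmetric])
  also have "\<dots> = ennreal ((1/3)^7)"
    by (simp add: prod_ennreal[symmetric] ennreal_power)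
  finally show ?thesis by (simp add: measure_def)
qed

lemma good_shift: "good m (\<lambda>k. \<omega> (k + n)) = good (n + m) \<omega>"
  by (simp add: good_def algebra_simps)

lemma F_null: "measure S3.S {\<omega>\<in>space S3.S. \<forall>k. \<not> good (7*k) \<omega>} = 0"
proof -
  let ?F = "{\<omega>\<in>space S3.S. \<forall>k. \<not> good (7*k) \<omega>}"
  let ?A = "{\<omega>\<in>space S3.S. \<not> good 0 \<omega>}"
  have eq: "?F = {\<omega>\<in>space S3.S. \<omega> \<in> ?A \<and> (\<lambda>k. \<omega> (k + 7)) \<in> ?F}"
  proof -
    have sh: "(\<lambda>k. \<omega> (k + 7)) \<in> space S3.S" if "\<omega> \<in> space S3.S" for \<omega>
      using measurable_space[OF shift_meas that] .
    have H: "(\<forall>k. \<not> good (7*k) \<omega>) \<longleftrightarrow> \<not> good 0 \<omega> \<and> (\<forall>k. \<not> good (7*k) (\<lambda>k. \<omega> (k + 7)))" for \<omega>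
    proof -
      have "(\<forall>k. \<not> good (7*k) \<omega>) \<longleftrightarrow> \<not> good (7*0) \<omega> \<and> (\<forall>k. \<not> good (7*Suc k) \<omega>)"
        apply (intro iffI conjI allI)
          apply blast
         apply blast
        apply (case_tac k)
         apply (simp del: mult_Suc_right)+
        done
      then show ?thesis by (simp add: good_shift)
    qed
    show ?thesis unfolding set_eq_iff mem_Collect_eq using H sh by blast
  qed
  have pre: "\<omega>' \<in> ?A" if "\<omega> \<in> space S3.S" "\<omega>' \<in> space S3.S" "\<forall>i<7. \<omega> i = \<omega>' i" "\<omega> \<in> ?A" for \<omega> \<omega>'
    using that by (auto simp: good_def)
  have "emeasure S3.S ?F = emeasure S3.S {\<omega>\<in>space S3.S. \<omega> \<in> ?A \<and> (\<lambda>k. \<omega> (k + 7)) \<in> ?F}"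
    using eq by (rule arg_cong)
  also have "\<dots> = emeasure S3.S ?A * emeasure S3.S ?F"
    by (rule split_meas[OF A0meas Fmeas pre])
  finally have "emeasure S3.S ?F = emeasure S3.S ?A * emeasure S3.S ?F" .
  then have "measure S3.S ?F = measure S3.S ?A * measure S3.S ?F"
  proof -
    have "ennreal (measure S3.S ?F) = ennreal (measure S3.S ?A) * ennreal (measure S3.S ?F)"
      using \<open>emeasure S3.S ?F = emeasure S3.S ?A * emeasure S3.S ?F\<close> by (simp only: S3.P.emeasure_eq_measure)
    also have "\<dots> = ennreal (measure S3.S ?A * measure S3.S ?F)" by (rule ennreal_mult''[symmetric]) simp
    finally show ?thesis by (rule ennreal_inj[THEN iffD1, rotated 2]) auto
  qed
  moreover have "measure S3.S ?A = 1 - (1/3)^7"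
  proof -
    have "?A = space S3.S - {\<omega>\<in>space S3.S. good 0 \<omega>}" by auto
    moreover have "{\<omega>\<in>space S3.S. good 0 \<omega>} \<in> sets S3.S" unfolding good_def by measurable
    ultimately show ?thesis using S3.P.prob_compl[of "{\<omega>\<in>space S3.S. good 0 \<omega>}"] prob_good0
      by simp
  qed
  ultimately have "measure S3.S ?F = (1 - (1/3)^7) * measure S3.S ?F" by simp
  then show ?thesis by (simp add: algebra_simps)
qed

lemma AE_good: "AE \<omega> in S3.S. infinite {k. good (7*k) \<omega>}"
proof -
  let ?F = "{\<omega>\<in>space S3.S. \<forall>k. \<not> good (7*k) \<omega>}"
  let ?G = "\<lambda>N. {\<omega>\<in>space S3.S. \<omega> \<in> space S3.S \<and> (\<lambda>k. \<omega> (k + 7*N)) \<in> ?F}"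
  have G0: "?G N \<in> null_sets S3.S" for N
  proof -
    have "emeasure S3.S (?G N) = emeasure S3.S (space S3.S) * emeasure S3.S ?F"
      by (rule split_meas[OF sets.top Fmeas]) auto
    also have "emeasure S3.S ?F = 0" using F_null by (simp only: S3.P.emeasure_eq_measure) simp
    finally have "emeasure S3.S (?G N) = 0" by simp
    moreover have "?G N \<in> sets S3.S"
    proof -
      have "?G N = (\<lambda>\<omega> k. \<omega> (k + 7*N)) -` ?F \<inter> space S3.S" by auto
      then show ?thesis using measurable_sets[OF shift_meas Fmeas] by simp
    qed
    ultimately show ?thesis by auto
  qed
  show ?thesis
  proof (rule AE_I')
    show "(\<Union>N. ?G N) \<in> null_sets S3.S" using G0 by (intro null_sets_UN) auto
    show "{\<omega> \<in> space S3.S. \<not> infinite {k. good (7 * k) \<omega>}} \<subseteq> (\<Union>N. ?G N)"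
    proof (rule subsetI)
      fix \<omega> assume "\<omega> \<in> {\<omega> \<in> space S3.S. \<not> infinite {k. good (7 * k) \<omega>}}"
      then have sp: "\<omega> \<in> space S3.S" and fin: "finite {k. good (7 * k) \<omega>}" by auto
      then obtain N where N: "\<forall>k\<ge>N. \<not> good (7*k) \<omega>"
        by (metis finite_nat_set_iff_bounded_le mem_Collect_eq not_less_eq_eq)
      have "\<not> good (7*k) (\<lambda>k. \<omega> (k + 7*N))" for k
        using N[rule_format, of "N + k"] by (simp add: good_shift algebra_simps)
      moreover have "(\<lambda>k. \<omega> (k + 7*N)) \<in> space S3.S" using measurable_space[OF shift_meas sp] .
      ultimately show "\<omega> \<in> (\<Union>N. ?G N)" using sp by blast
    qed
  qed
qed



lemma qv_meas: "qv \<in> measurable M3 borel"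
  by (simp add: measurable_cong_sets[OF sets_uniform_count_measure_count_space refl])

lemma tail_meas:
  assumes b: "(\<beta>::real) > 1"
  shows "(\<lambda>\<omega>. tailpt \<beta> \<omega> j) \<in> borel_measurable S3.S"
proof (rule borel_measurable_LIMSEQ_metric)
  fix n
  show "(\<lambda>\<omega>. \<Sum>i<n. (1 / \<beta>^(Suc i)) *\<^sub>R qv (\<omega> (j + i))) \<in> borel_measurable S3.S"
  proof (intro borel_measurable_sum borel_measurable_scaleR borel_measurable_const)
    fix i
    show "(\<lambda>\<omega>. qv (\<omega> (j + i))) \<in> borel_measurable S3.S"
      by (rule measurable_compose[OF measurable_component_singleton[of "j+i" UNIV "\<lambda>_. M3"] qv_meas]) simp
  qed
next
  fix \<omega>
  show "(\<lambda>n. \<Sum>i<n. (1 / \<beta>^(Suc i)) *\<^sub>R qv (\<omega> (j + i))) \<longlonglongrightarrow> tailpt \<beta> \<omega> j"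
    unfolding tailpt_def by (rule summable_LIMSEQ[OF tail_summable[OF b]])
qed

lemma Hset_borel: "Hset \<beta> \<in> sets borel"
proof -
  have "Hset \<beta> = {z. fst z < 1/\<beta> \<and> snd z < 1/\<beta> \<and> 1/(\<beta>*(\<beta>-1)) < fst z + snd z}"
    by (auto simp: Hset_def)
  also have "open \<dots>"
    by (intro open_Collect_conj open_Collect_less continuous_intros)
  finally show ?thesis by (rule borel_open)
qed

lemma Ct_borel: "Ct01 \<beta> \<in> sets borel" "Ct12 \<beta> \<in> sets borel" "Ct02 \<beta> \<in> sets borel"
proof -
  have "Ct01 \<beta> = {z. 1/\<beta> \<le> fst z \<and> 0 \<le> snd z \<and> fst z + snd z \<le> 1/(\<beta>*(\<beta>-1))}"
    by (auto simp: Ct01_def)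
  also have "closed \<dots>" by (intro closed_Collect_conj closed_Collect_le continuous_intros)
  finally show "Ct01 \<beta> \<in> sets borel" by (rule borel_closed)
  have "Ct12 \<beta> = {z. 1/\<beta> \<le> fst z \<and> 1/\<beta> \<le> snd z \<and> fst z + snd z \<le> 1/(\<beta>-1)}"
    by (auto simp: Ct12_def)
  also have "closed \<dots>" by (intro closed_Collect_conj closed_Collect_le continuous_intros)
  finally show "Ct12 \<beta> \<in> sets borel" by (rule borel_closed)
  have "Ct02 \<beta> = {z. 0 \<le> fst z \<and> 1/\<beta> \<le> snd z \<and> fst z + snd z \<le> 1/(\<beta>*(\<beta>-1))}"
    by (auto simp: Ct02_def)
  also have "closed \<dots>" by (intro closed_Collect_conj closed_Collect_le continuous_intros)
  finally show "Ct02 \<beta> \<in> sets borel" by (rule borel_closed)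
qed

definition finv :: "real \<Rightarrow> nat \<Rightarrow> real \<times> real \<Rightarrow> real \<times> real" where
  "finv \<beta> i z = \<beta> *\<^sub>R z - qv i"

lemma fmap_finv: "\<beta> \<noteq> 0 \<Longrightarrow> fmap \<beta> i (finv \<beta> i z) = z"
  by (simp add: fmap_def finv_def)

lemma finv_fmap: "\<beta> \<noteq> 0 \<Longrightarrow> finv \<beta> i (fmap \<beta> i z) = z"
  by (simp add: fmap_def finv_def)

lemma pow_inv1: "\<beta> \<noteq> 0 \<Longrightarrow> (fmap \<beta> j ^^ n) ((finv \<beta> j ^^ n) z) = z"
proof (induction n arbitrary: z)
  case (Suc n)
  have "(fmap \<beta> j ^^ Suc n) ((finv \<beta> j ^^ Suc n) z) = (fmap \<beta> j ^^ n) (fmap \<beta> j (finv \<beta> j ((finv \<beta> j ^^ n) z)))"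
    by (simp only: funpow_Suc_right[where f="fmap \<beta> j"] funpow.simps(2)[where f="finv \<beta> j"] comp_apply)
  then show ?case using Suc by (simp add: fmap_finv)
qed simp

lemma pow_inv2: "\<beta> \<noteq> 0 \<Longrightarrow> (finv \<beta> j ^^ n) ((fmap \<beta> j ^^ n) z) = z"
proof (induction n arbitrary: z)
  case (Suc n)
  have "(finv \<beta> j ^^ Suc n) ((fmap \<beta> j ^^ Suc n) z) = (finv \<beta> j ^^ n) (finv \<beta> j (fmap \<beta> j ((fmap \<beta> j ^^ n) z)))"
    by (simp only: funpow_Suc_right[where f="finv \<beta> j"] funpow.simps(2)[where f="fmap \<beta> j"] comp_apply)
  then show ?case using Suc by (simp add: finv_fmap)
qed simp

lemma img_eq:
  assumes "\<beta> \<noteq> 0"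
  shows "(fmap \<beta> i \<circ> (fmap \<beta> j ^^ n)) ` S = (\<lambda>z. (finv \<beta> j ^^ n) (finv \<beta> i z)) -` S"
proof (rule set_eqI)
  fix z
  show "z \<in> (fmap \<beta> i \<circ> (fmap \<beta> j ^^ n)) ` S \<longleftrightarrow> z \<in> (\<lambda>z. (finv \<beta> j ^^ n) (finv \<beta> i z)) -` S"
  proof
    assume "z \<in> (fmap \<beta> i \<circ> (fmap \<beta> j ^^ n)) ` S"
    then obtain h where "h \<in> S" "z = fmap \<beta> i ((fmap \<beta> j ^^ n) h)" by auto
    then show "z \<in> (\<lambda>z. (finv \<beta> j ^^ n) (finv \<beta> i z)) -` S"
      using assms by (simp add: finv_fmap pow_inv2)
  next
    assume "z \<in> (\<lambda>z. (finv \<beta> j ^^ n) (finv \<beta> i z)) -` S"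
    moreover have "z = (fmap \<beta> i \<circ> (fmap \<beta> j ^^ n)) ((finv \<beta> j ^^ n) (finv \<beta> i z))"
      using assms by (simp add: fmap_finv pow_inv1)
    ultimately show "z \<in> (fmap \<beta> i \<circ> (fmap \<beta> j ^^ n)) ` S" by auto
  qed
qed

lemma finv_meas: "finv \<beta> i \<in> borel_measurable borel"
  unfolding finv_def by measurable

lemma finv_pow_meas: "(finv \<beta> i ^^ n) \<in> borel_measurable borel"
proof (induction n)
  case 0 then show ?case by simp
next
  case (Suc n)
  then show ?case using measurable_comp[OF Suc finv_meas] by (simp only: funpow.simps(2))
qed

lemma img_borel:
  assumes "\<beta> \<noteq> 0"
  shows "(fmap \<beta> i \<circ> (fmap \<beta> j ^^ n)) ` Hset \<beta> \<in> sets borel"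
proof -
  have m: "(\<lambda>z. (finv \<beta> j ^^ n) (finv \<beta> i z)) \<in> borel_measurable borel"
    using measurable_comp[OF finv_meas finv_pow_meas] by (simp add: comp_def)
  have "(\<lambda>z. (finv \<beta> j ^^ n) (finv \<beta> i z)) -` Hset \<beta> \<inter> space borel \<in> sets borel"
    by (rule measurable_sets[OF m Hset_borel])
  then show ?thesis using img_eq[OF assms] by simp
qed

lemma Cpart_borel:
  assumes "\<beta> \<noteq> 0" "T \<in> sets borel"
  shows "Cpart \<beta> i j T \<in> sets borel"
  unfolding Cpart_def using assms img_borel[OF assms(1)]
  by (intro sets.Diff sets.countable_UN' sets.Un) auto

lemma Cset_borel: "\<beta> \<noteq> 0 \<Longrightarrow> Cset \<beta> \<in> sets borel"
  unfolding Cset_def by (intro sets.Un Cpart_borel Ct_borel)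

lemma Dset_sets:
  assumes b: "(\<beta>::real) > 1"
  shows "Dset \<beta> \<in> sets S3.S"
proof -
  define E where "E j = (\<lambda>\<omega>. tailpt \<beta> \<omega> j) -` Cset \<beta> \<inter> space S3.S" for j
  have E: "E j \<in> sets S3.S" for j
    unfolding E_def using b by (intro measurable_sets[OF tail_meas Cset_borel]) auto
  have "Dset \<beta> = (\<Inter>N. \<Union>j\<in>{N..}. E j)"
  proof (rule set_eqI)
    fix \<omega>
    show "\<omega> \<in> Dset \<beta> \<longleftrightarrow> \<omega> \<in> (\<Inter>N. \<Union>j\<in>{N..}. E j)"
    proof -
      have sp_iff: "\<omega> \<in> space S3.S \<longleftrightarrow> (\<forall>n. \<omega> n \<in> {0,1,2})" using space_S by blast
      have inf_iff: "infinite {j. tailpt \<beta> \<omega> j \<in> Cset \<beta>} \<longleftrightarrow> (\<forall>N. \<exists>j\<ge>N. tailpt \<beta> \<omega> j \<in> Cset \<beta>)"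
        by (simp add: infinite_nat_iff_unbounded_le)
      have d: "\<omega> \<in> Dset \<beta> \<longleftrightarrow> (\<forall>n. \<omega> n \<in> {0,1,2}) \<and> infinite {j. tailpt \<beta> \<omega> j \<in> Cset \<beta>}"
        unfolding Dset_def by (rule mem_Collect_eq)
      have e: "\<omega> \<in> (\<Inter>N. \<Union>j\<in>{N..}. E j) \<longleftrightarrow> (\<forall>N. \<exists>j\<ge>N. tailpt \<beta> \<omega> j \<in> Cset \<beta> \<and> \<omega> \<in> space S3.S)"
        unfolding E_def by auto
      show ?thesis unfolding d e inf_iff sp_iff by blast
    qed
  qed
  also have "\<dots> \<in> sets S3.S" using E by (intro sets.countable_INT' sets.countable_UN') auto
  finally show ?thesis .
qed

theorem lemma6p8:
  fixes \<beta> :: real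
  assumes "3/2 < \<beta>" and "\<beta> \<le> beta_star"
  shows "emeasure Ups (Dset \<beta>) = 1"
proof -
  have b2: "\<beta> \<le> 31/20" using assms(2) beta_star_le by linarith
  have b: "\<beta> > 1" using assms(1) by linarith
  have "AE \<omega> in S3.S. \<omega> \<in> Dset \<beta>"
    using AE_good
  proof (rule AE_mp[OF _ AE_I2[OF impI]])
    fix \<omega> assume sp: "\<omega> \<in> space S3.S" and inf: "infinite {k. good (7*k) \<omega>}"
    have "(\<lambda>k. 7*k) ` {k. good (7*k) \<omega>} \<subseteq> {j. tailpt \<beta> \<omega> j \<in> Cset \<beta>}"
      by (auto intro!: good_C[OF assms(1) b2])
    moreover have "infinite ((\<lambda>k. 7*k) ` {k. good (7*k) \<omega>})"
      using inf by (auto dest!: finite_imageD simp: inj_on_def)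
    ultimately have "infinite {j. tailpt \<beta> \<omega> j \<in> Cset \<beta>}" using infinite_super by blast
    moreover have "\<forall>n. \<omega> n \<in> {0,1,2}" using sp space_S by blast
    ultimately show "\<omega> \<in> Dset \<beta>" unfolding Dset_def by blast
  qed
  then show ?thesis unfolding Ups_eq by (rule S3.P.emeasure_eq_1_AE[OF Dset_sets[OF b]])
qed

end
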